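(* The function $q\mapsto (p(q)-c)\big(1-F(p(q)/q)\big)$ is strictly convex on $Q$.
   Context: Let $0<q_\ell<q_h<\infty$, $Q=[q_\ell,q_h]$, and let $c$ be a real number with $0<c<q_\ell$. Let $F$ be a probability distribution on $[0,1]$ with support $[0,1]$ admitting a twice continuously differentiable density $f:(0,1)\to\mathbb{R}_{>0}$. Define $r(v)=(1-F(v))/f(v)$ and $\psi(v)=v-r(v)$ on $(0,1)$, and assume $\psi'(v)>0$ whenever $\psi(v)>0$. For $q\in Q$, $p(q)$ is the unique maximizer over $p\in\mathbb{R}$ of $(p-c)\big(1-F(p/q)\big)$. *)

theory Defs
  imports "HOL-Analysis.Analysis"
begin

definition strict_convex_on :: "real set \<Rightarrow> (real \<Rightarrow> real) \<Rightarrow> bool" where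
  "strict_convex_on S g \<longleftrightarrow>
     (\<forall>x\<in>S. \<forall>y\<in>S. x \<noteq> y \<longrightarrow> (\<forall>t::real. 0 < t \<and> t < 1 \<longrightarrow>
        g ((1 - t) * x + t * y) < (1 - t) * g x + t * g y))"

definition cdf_with_density :: "(real \<Rightarrow> real) \<Rightarrow> (real \<Rightarrow> real) \<Rightarrow> bool" where
  "cdf_with_density F f \<longleftrightarrow>
     (\<forall>x. x \<le> 0 \<longrightarrow> F x = 0) \<and> (\<forall>x. 1 \<le> x \<longrightarrow> F x = 1) \<and>
     continuous_on UNIV F \<and>
     (\<forall>x\<in>{0<..<1}. (F has_real_derivative f x) (at x)) \<and>
     (\<forall>x\<in>{0<..<1}. 0 < f x) \<and>
     (\<exists>f' f''. (\<forall>x\<in>{0<..<1}. (f has_real_derivative f' x) (at x) \<and>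
                                (f' has_real_derivative f'' x) (at x)) \<and>
               continuous_on {0<..<1} f'')"

definition hazard_inv :: "(real \<Rightarrow> real) \<Rightarrow> (real \<Rightarrow> real) \<Rightarrow> real \<Rightarrow> real" where
  "hazard_inv F f v = (1 - F v) / f v"

definition virt_val :: "(real \<Rightarrow> real) \<Rightarrow> (real \<Rightarrow> real) \<Rightarrow> real \<Rightarrow> real" where
  "virt_val F f v = v - hazard_inv F f v"

definition profit :: "(real \<Rightarrow> real) \<Rightarrow> real \<Rightarrow> real \<Rightarrow> real \<Rightarrow> real" where
  "profit F c q p = (p - c) * (1 - F (p / q))"

end

theory Submission
  imports Defs
begin

lemma F_lt1:
  assumes "cdf_with_density F f" "0 < w" "w < 1"
  shows "F w < 1"
proof -
  have c: "continuous_on UNIV F" and d: "\<forall>x\<in>{0<..<1}. (F has_real_derivative f x) (at x)"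
    and fp: "\<forall>x\<in>{0<..<1}. 0 < f x" and one: "F 1 = 1"
    using assms(1) unfolding cdf_with_density_def by auto
  have dif: "F differentiable (at x)" if "w < x" "x < 1" for x
  proof -
    have "x \<in> {0<..<1}" using that assms(2) by simp
    hence "(F has_real_derivative f x) (at x)" using d by blast
    thus ?thesis using real_differentiable_def by blast
  qed
  have cw: "continuous_on {w..1} F" using continuous_on_subset[OF c] by blast
  obtain l z where z: "w < z" "z < 1" "DERIV F z :> l" "F 1 - F w = (1 - w) * l"
    using MVT[OF assms(3) cw dif] by blast
  have zi: "z \<in> {0<..<1}" using z(1,2) assms(2) by simp
  have "DERIV F z :> f z" using d zi by blast
  hence "l = f z" using z(3) DERIV_unique by blast
  moreover have "f z > 0" using fp z assms(2) by auto
  ultimately have "F 1 - F w > 0" using z assms(3) by simp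
  thus ?thesis using one by simp
qed

lemma foc:
  assumes F: "cdf_with_density F f" and c: "0 < c" "c < q"
    and mx: "\<forall>w. (q* w-c)*(1-F w) \<le> (q* v-c)*(1-F v)"
  shows "0 < v \<and> v < 1 \<and> q*(1-F v) - (q* v-c) * f v = 0"
proof -
  have q: "q > 0" using c by simp
  have F0: "\<forall>x. x \<le> 0 \<longrightarrow> F x = 0" and F1: "\<forall>x. 1 \<le> x \<longrightarrow> F x = 1"
    and d: "\<forall>x\<in>{0<..<1}. (F has_real_derivative f x) (at x)"
    using F unfolding cdf_with_density_def by auto
  define w where "w = (c/q + 1)/2"
  have cq: "c/q < 1" "0 < c/q" using c q by auto
  have aux: "r < (r+1)/2 \<and> (r+1)/2 < 1 \<and> 0 < (r+1)/2" if "r < 1" "0 < r" for r :: real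
    using that by simp
  have w1: "c/q < w" and w2: "w < 1" and w3: "0 < w"
    using aux[OF cq] unfolding w_def by auto
  note w = w1 w2 w3
  have "q* w - c > 0" using w(1) q by (simp add: field_simps)
  moreover have "1 - F w > 0" using F_lt1[OF F w(3) w(2)] by simp
  ultimately have pos: "(q* v-c)*(1-F v) > 0" using mx[rule_format, of w] by (smt (verit) mult_pos_pos)
  have v0: "v > 0"
  proof (rule ccontr)
    assume "\<not> v > 0"
    hence "F v = 0" "q* v - c < 0" using F0 q c
      by (auto, smt (verit) mult_nonneg_nonpos)
    thus False using pos by simp
  qed
  have v1: "v < 1"
  proof (rule ccontr)
    assume "\<not> v < 1"
    hence "F v = 1" using F1 by auto
    thus False using pos by simp
  qed
  have D: "((\<lambda>w. (q* w-c)*(1-F w)) has_real_derivative (q*(1-F v) - (q* v-c) * f v)) (at v)"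
    using d v0 v1 by (auto intro!: derivative_eq_intros simp: algebra_simps)
  have "q*(1-F v) - (q* v-c) * f v = 0"
    by (rule DERIV_local_max[OF D, of 1]) (use mx in auto)
  thus ?thesis using v0 v1 by simp
qed

theorem lemma2:
  fixes F f :: "real \<Rightarrow> real" and c ql qh :: real and p :: "real \<Rightarrow> real"
  assumes "0 < ql" and "ql < qh" and "0 < c" and "c < ql"
    and "cdf_with_density F f"
    and "\<forall>v\<in>{0<..<1}. virt_val F f v > 0 \<longrightarrow> deriv (virt_val F f) v > 0"
    and "\<forall>q\<in>{ql..qh}. \<forall>p'. p' \<noteq> p q \<longrightarrow> profit F c q p' < profit F c q (p q)"
  shows "strict_convex_on {ql..qh} (\<lambda>q. (p q - c) * (1 - F (p q / q)))"
  unfolding strict_convex_on_def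
proof (intro ballI impI allI)
  fix x y t :: real
  assume x: "x \<in> {ql..qh}" and y: "y \<in> {ql..qh}" and xy: "x \<noteq> y" and t: "0 < t \<and> t < 1"
  define m where "m = (1-t)*x + t*y"
  have mlo: "ql \<le> m"
  proof -
    have "(1-t)*ql \<le> (1-t)*x" using x t by (intro mult_left_mono) auto
    moreover have "t*ql \<le> t*y" using y t by (intro mult_left_mono) auto
    ultimately
    show ?thesis unfolding m_def by (simp add: algebra_simps)
  qed
  have mhi: "m \<le> qh"
  proof -
    have "(1-t)*x \<le> (1-t)*qh" using x t by (intro mult_left_mono) auto
    moreover have "t*y \<le> t*qh" using y t by (intro mult_left_mono) auto
    ultimately
    show ?thesis unfolding m_def by (simp add: algebra_simps)
  qed
  have mQ: "m \<in> {ql..qh}" using mlo mhi by simp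
  have mpos: "m > 0" using mlo assms(1) by simp
  have xpos: "x > 0" and ypos: "y > 0" using x y assms(1) by auto
  define v where "v = p m / m"
  have pm: "p m = m * v" using mpos unfolding v_def by simp
  have le: "profit F c q u \<le> profit F c q (p q)" if "q \<in> {ql..qh}" for q u
  proof (cases "u = p q")
    case False
    then show ?thesis using assms(7) that by (meson less_imp_le)
  qed simp
  have pr: "profit F c q (q* w) = (q* w-c)*(1-F w)" if "q > 0" for q w
    unfolding profit_def using that by simp
  have strict: "profit F c x (x* v) < profit F c x (p x) \<or> profit F c y (y* v) < profit F c y (p y)"
  proof (rule ccontr)
    assume "\<not> ?thesis"
    hence n1: "\<not> profit F c x (x* v) < profit F c x (p x)" and n2: "\<not> profit F c y (y* v) < profit F c y (p y)"
      by auto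
    have ex: "x* v = p x" using n1 assms(7) x by meson
    have ey: "y* v = p y" using n2 assms(7) y by meson
    have mxx: "\<forall>w. (x* w-c)*(1-F w) \<le> (x* v-c)*(1-F v)"
    proof
      fix w
      have "profit F c x (x* w) \<le> profit F c x (p x)"
        using le x by blast
      thus "(x* w-c)*(1-F w) \<le> (x* v-c)*(1-F v)"
        using pr[OF xpos] ex by metis
    qed
    have myy: "\<forall>w. (y* w-c)*(1-F w) \<le> (y* v-c)*(1-F v)"
    proof
      fix w
      have "profit F c y (y* w) \<le> profit F c y (p y)"
        using le y by blast
      thus "(y* w-c)*(1-F w) \<le> (y* v-c)*(1-F v)"
        using pr[OF ypos] ey by metis
    qed
    have cx: "c < x" "c < y" using x y assms(4) by auto
    have A: "0 < v" "v < 1" "x*(1-F v) - (x* v-c) * f v = 0"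
      using foc[OF assms(5) assms(3) cx(1) mxx] by auto
    have B: "y*(1-F v) - (y* v-c) * f v = 0"
      using foc[OF assms(5) assms(3) cx(2) myy] by auto
    have "(x - y) * (1 - F v - v * f v) = (x*(1-F v) - (x* v-c) * f v) - (y*(1-F v) - (y* v-c) * f v)"
      by (simp add: algebra_simps)
    also have "\<dots> = 0" using A(3) B by simp
    finally have "(x - y) * (1 - F v - v * f v) = 0" .
    hence E: "1 - F v = v * f v" using xy by simp
    have "c * f v = x * (v * f v) - (x* v-c)*f v" by (simp add: algebra_simps)
    also have "\<dots> = x*(1-F v) - (x* v-c)*f v" using E by simp
    also have "\<dots> = 0" using A(3) .
    finally have "c * f v = 0" .
    moreover have "f v > 0" using assms(5) A(1,2) unfolding cdf_with_density_def by auto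
    ultimately show False using assms(3) by simp
  qed
  have "(p m - c) * (1 - F (p m / m)) = (m* v - c)*(1 - F v)" using pm mpos by simp
  also have "\<dots> = (1-t) * ((x* v-c)*(1-F v)) + t * ((y* v-c)*(1-F v))"
    unfolding m_def by (simp add: algebra_simps)
  also have "\<dots> = (1-t) * profit F c x (x* v) + t * profit F c y (y* v)"
    using pr xpos ypos by simp
  also have "\<dots> < (1-t) * profit F c x (p x) + t * profit F c y (p y)"
  proof -
    have l1: "profit F c x (x* v) \<le> profit F c x (p x)" using le x by blast
    have l2: "profit F c y (y* v) \<le> profit F c y (p y)" using le y by blast
    have t1: "0 < 1 - t" "0 < t" using t by auto
    show ?thesis using strict
    proof
      assume "profit F c x (x* v) < profit F c x (p x)"
      hence "(1-t) * profit F c x (x* v) < (1-t) * profit F c x (p x)" using t1 by simp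
      moreover have "t * profit F c y (y* v) \<le> t * profit F c y (p y)" using l2 t1 by simp
      ultimately show ?thesis by simp
    next
      assume "profit F c y (y* v) < profit F c y (p y)"
      hence "t * profit F c y (y* v) < t * profit F c y (p y)" using t1 by simp
      moreover have "(1-t) * profit F c x (x* v) \<le> (1-t) * profit F c x (p x)" using l1 t1 by simp
      ultimately show ?thesis by simp
    qed
  qed
  also have "\<dots> = (1-t) * ((p x - c) * (1 - F (p x / x))) + t * ((p y - c) * (1 - F (p y / y)))"
    unfolding profit_def by simp
  finally show "(p ((1 - t) * x + t * y) - c) * (1 - F (p ((1 - t) * x + t * y) / ((1 - t) * x + t * y)))
       < (1 - t) * ((p x - c) * (1 - F (p x / x))) + t * ((p y - c) * (1 - F (p y / y)))"
    unfolding m_def .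
qed

end
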